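(* Let $B$ be an integral $n\times n$ matrix with $B_{ij}\ge0$ and $B_{ii}>0$ for all $1\le i,j\le n$, and let $k$ be a field. Then there exist a finite dimensional triangular $k$-algebra $A$ (with respect to primitive orthogonal idempotents $e_1,\dots,e_n$) and a triangular $A$-$A$-bimodule $M$ such that $C_A=B_+$ and $C_M=B_-$. In particular $B=C_\Lambda$ for $\Lambda=A\ltimes DM$.
   Context: $A$ is triangular if $e_iAe_j=0$ for $j<i$ and $e_iAe_i\cong k$; a bimodule $M$ is triangular if $e_iMe_j=0$ for $j<i$. $DM=\operatorname{Hom}_k(M,k)$ and $\Lambda=A\ltimes DM$ is $A\oplus DM$ with $(a,\mu)(a',\mu')=(aa',a\mu'+\mu a')$, with idempotents $(e_i,0)$. Cartan matrices: $(C_A)_{ij}=\dim_ke_{n+1-j}Ae_{n+1-i}$, $(C_M)_{ij}=\dim_ke_{n+1-j}Me_{n+1-i}$, $(C_\Lambda)_{ij}=\dim_ke_{n+1-j}\Lambda e_{n+1-i}$. For a square matrix $B$: $(B_+)_{ij}=B_{ij}$ if $i<j$, $1$ if $i=j$, $0$ otherwise; $(B_-)_{ij}=B_{ji}$ if $i<j$, $B_{ii}-1$ if $i=j$, $0$ otherwise (so $B=B_++B_-^T$). *)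

theory Defs
  imports Main HOL.Vector_Spaces "HOL-Library.Function_Algebras" "HOL-Library.Product_Plus"
begin

text \<open>Finite dimensional k-vector spaces are modelled concretely as k^d, i.e. functions
  nat => k vanishing from d on, with pointwise addition and the scalar action fsc.
  Every finite dimensional k-algebra (resp. bimodule) is isomorphic to one of this shape,
  so existential quantification over these concrete models is faithful.\<close>

definition fsc :: "'k::field \<Rightarrow> (nat \<Rightarrow> 'k) \<Rightarrow> (nat \<Rightarrow> 'k)" where
  "fsc c v = (\<lambda>i. c * v i)"

definition kspace :: "nat \<Rightarrow> (nat \<Rightarrow> 'k::zero) set" where
  "kspace d = {v. \<forall>i\<ge>d. v i = 0}"

definition kdim :: "(nat \<Rightarrow> 'k::field) set \<Rightarrow> nat" where
  "kdim S = vector_space.dim fsc S"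

definition fd_algebra :: "nat \<Rightarrow> ((nat \<Rightarrow> 'k::field) \<Rightarrow> (nat \<Rightarrow> 'k) \<Rightarrow> (nat \<Rightarrow> 'k))
    \<Rightarrow> (nat \<Rightarrow> 'k) \<Rightarrow> bool" where
  "fd_algebra d mul one \<longleftrightarrow>
     one \<in> kspace d \<and>
     (\<forall>x\<in>kspace d. \<forall>y\<in>kspace d. mul x y \<in> kspace d) \<and>
     (\<forall>x\<in>kspace d. \<forall>y\<in>kspace d. \<forall>z\<in>kspace d.
        mul (x + y) z = mul x z + mul y z \<and> mul x (y + z) = mul x y + mul x z \<and>
        mul (mul x y) z = mul x (mul y z)) \<and>
     (\<forall>c. \<forall>x\<in>kspace d. \<forall>y\<in>kspace d.
        mul (fsc c x) y = fsc c (mul x y) \<and> mul x (fsc c y) = fsc c (mul x y)) \<and>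
     (\<forall>x\<in>kspace d. mul one x = x \<and> mul x one = x)"

definition fd_bimodule :: "nat \<Rightarrow> ((nat \<Rightarrow> 'k::field) \<Rightarrow> (nat \<Rightarrow> 'k) \<Rightarrow> (nat \<Rightarrow> 'k))
    \<Rightarrow> (nat \<Rightarrow> 'k) \<Rightarrow> nat
    \<Rightarrow> ((nat \<Rightarrow> 'k) \<Rightarrow> (nat \<Rightarrow> 'k) \<Rightarrow> (nat \<Rightarrow> 'k))
    \<Rightarrow> ((nat \<Rightarrow> 'k) \<Rightarrow> (nat \<Rightarrow> 'k) \<Rightarrow> (nat \<Rightarrow> 'k)) \<Rightarrow> bool" where
  "fd_bimodule d mul one m lact ract \<longleftrightarrow>
     (\<forall>a\<in>kspace d. \<forall>x\<in>kspace m. lact a x \<in> kspace m \<and> ract x a \<in> kspace m) \<and>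
     (\<forall>a\<in>kspace d. \<forall>b\<in>kspace d. \<forall>x\<in>kspace m. \<forall>y\<in>kspace m.
        lact (a + b) x = lact a x + lact b x \<and> lact a (x + y) = lact a x + lact a y \<and>
        ract (x + y) a = ract x a + ract y a \<and> ract x (a + b) = ract x a + ract x b \<and>
        lact (mul a b) x = lact a (lact b x) \<and> ract x (mul a b) = ract (ract x a) b \<and>
        lact a (ract x b) = ract (lact a x) b) \<and>
     (\<forall>c. \<forall>a\<in>kspace d. \<forall>x\<in>kspace m.
        lact (fsc c a) x = fsc c (lact a x) \<and> lact a (fsc c x) = fsc c (lact a x) \<and>
        ract (fsc c x) a = fsc c (ract x a) \<and> ract x (fsc c a) = fsc c (ract x a)) \<and>
     (\<forall>x\<in>kspace m. lact one x = x \<and> ract x one = x)"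

definition corner :: "nat \<Rightarrow> ((nat \<Rightarrow> 'k::field) \<Rightarrow> (nat \<Rightarrow> 'k) \<Rightarrow> (nat \<Rightarrow> 'k))
    \<Rightarrow> (nat \<Rightarrow> nat \<Rightarrow> 'k) \<Rightarrow> nat \<Rightarrow> nat \<Rightarrow> (nat \<Rightarrow> 'k) set" where
  "corner d mul e i j = {mul (mul (e i) a) (e j) | a. a \<in> kspace d}"

definition mcorner :: "nat \<Rightarrow> ((nat \<Rightarrow> 'k::field) \<Rightarrow> (nat \<Rightarrow> 'k) \<Rightarrow> (nat \<Rightarrow> 'k))
    \<Rightarrow> ((nat \<Rightarrow> 'k) \<Rightarrow> (nat \<Rightarrow> 'k) \<Rightarrow> (nat \<Rightarrow> 'k))
    \<Rightarrow> (nat \<Rightarrow> nat \<Rightarrow> 'k) \<Rightarrow> nat \<Rightarrow> nat \<Rightarrow> (nat \<Rightarrow> 'k) set" where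
  "mcorner m lact ract e i j = {lact (e i) (ract x (e j)) | x. x \<in> kspace m}"

definition idem :: "nat \<Rightarrow> ((nat \<Rightarrow> 'k::field) \<Rightarrow> (nat \<Rightarrow> 'k) \<Rightarrow> (nat \<Rightarrow> 'k))
    \<Rightarrow> (nat \<Rightarrow> 'k) \<Rightarrow> bool" where
  "idem d mul x \<longleftrightarrow> x \<in> kspace d \<and> mul x x = x"

definition primitive_idem :: "nat \<Rightarrow> ((nat \<Rightarrow> 'k::field) \<Rightarrow> (nat \<Rightarrow> 'k) \<Rightarrow> (nat \<Rightarrow> 'k))
    \<Rightarrow> (nat \<Rightarrow> 'k) \<Rightarrow> bool" where
  "primitive_idem d mul x \<longleftrightarrow> idem d mul x \<and> x \<noteq> 0 \<and>
     \<not> (\<exists>f g. idem d mul f \<and> idem d mul g \<and> f \<noteq> 0 \<and> g \<noteq> 0 \<and>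
            mul f g = 0 \<and> mul g f = 0 \<and> x = f + g)"

definition complete_prim_orth :: "nat \<Rightarrow> ((nat \<Rightarrow> 'k::field) \<Rightarrow> (nat \<Rightarrow> 'k) \<Rightarrow> (nat \<Rightarrow> 'k))
    \<Rightarrow> (nat \<Rightarrow> 'k) \<Rightarrow> nat \<Rightarrow> (nat \<Rightarrow> nat \<Rightarrow> 'k) \<Rightarrow> bool" where
  "complete_prim_orth d mul one n e \<longleftrightarrow>
     (\<forall>i\<in>{1..n}. primitive_idem d mul (e i)) \<and>
     (\<forall>i\<in>{1..n}. \<forall>j\<in>{1..n}. i \<noteq> j \<longrightarrow> mul (e i) (e j) = 0) \<and>
     (\<Sum>i=1..n. e i) = one"

definition triangular_alg :: "nat \<Rightarrow> ((nat \<Rightarrow> 'k::field) \<Rightarrow> (nat \<Rightarrow> 'k) \<Rightarrow> (nat \<Rightarrow> 'k))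
    \<Rightarrow> nat \<Rightarrow> (nat \<Rightarrow> nat \<Rightarrow> 'k) \<Rightarrow> bool" where
  "triangular_alg d mul n e \<longleftrightarrow>
     (\<forall>i\<in>{1..n}. \<forall>j\<in>{1..n}. j < i \<longrightarrow> corner d mul e i j = {0}) \<and>
     (\<forall>i\<in>{1..n}. corner d mul e i i = {fsc c (e i) | c. True})"

definition triangular_bimod :: "nat \<Rightarrow> ((nat \<Rightarrow> 'k::field) \<Rightarrow> (nat \<Rightarrow> 'k) \<Rightarrow> (nat \<Rightarrow> 'k))
    \<Rightarrow> ((nat \<Rightarrow> 'k) \<Rightarrow> (nat \<Rightarrow> 'k) \<Rightarrow> (nat \<Rightarrow> 'k))
    \<Rightarrow> nat \<Rightarrow> (nat \<Rightarrow> nat \<Rightarrow> 'k) \<Rightarrow> bool" where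
  "triangular_bimod m lact ract n e \<longleftrightarrow>
     (\<forall>i\<in>{1..n}. \<forall>j\<in>{1..n}. j < i \<longrightarrow> mcorner m lact ract e i j = {0})"

definition cartanA :: "nat \<Rightarrow> ((nat \<Rightarrow> 'k::field) \<Rightarrow> (nat \<Rightarrow> 'k) \<Rightarrow> (nat \<Rightarrow> 'k))
    \<Rightarrow> nat \<Rightarrow> (nat \<Rightarrow> nat \<Rightarrow> 'k) \<Rightarrow> nat \<Rightarrow> nat \<Rightarrow> int" where
  "cartanA d mul n e i j = int (kdim (corner d mul e (n + 1 - j) (n + 1 - i)))"

definition cartanM :: "nat \<Rightarrow> ((nat \<Rightarrow> 'k::field) \<Rightarrow> (nat \<Rightarrow> 'k) \<Rightarrow> (nat \<Rightarrow> 'k))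
    \<Rightarrow> ((nat \<Rightarrow> 'k) \<Rightarrow> (nat \<Rightarrow> 'k) \<Rightarrow> (nat \<Rightarrow> 'k))
    \<Rightarrow> nat \<Rightarrow> (nat \<Rightarrow> nat \<Rightarrow> 'k) \<Rightarrow> nat \<Rightarrow> nat \<Rightarrow> int" where
  "cartanM m lact ract n e i j = int (kdim (mcorner m lact ract e (n + 1 - j) (n + 1 - i)))"

text \<open>The dual DM = Hom_k(M,k): k-linear functionals on k^m (extended by 0 off k^m).\<close>
definition dualsp :: "nat \<Rightarrow> ((nat \<Rightarrow> 'k::field) \<Rightarrow> 'k) set" where
  "dualsp m = {\<mu>. (\<forall>x\<in>kspace m. \<forall>y\<in>kspace m. \<mu> (x + y) = \<mu> x + \<mu> y) \<and>
                 (\<forall>c. \<forall>x\<in>kspace m. \<mu> (fsc c x) = c * \<mu> x) \<and>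
                 (\<forall>x. x \<notin> kspace m \<longrightarrow> \<mu> x = 0)}"

definition dleft :: "nat \<Rightarrow> ((nat \<Rightarrow> 'k) \<Rightarrow> (nat \<Rightarrow> 'k) \<Rightarrow> (nat \<Rightarrow> 'k))
    \<Rightarrow> (nat \<Rightarrow> 'k::field) \<Rightarrow> ((nat \<Rightarrow> 'k) \<Rightarrow> 'k) \<Rightarrow> ((nat \<Rightarrow> 'k) \<Rightarrow> 'k)" where
  "dleft m ract a \<mu> = (\<lambda>x. if x \<in> kspace m then \<mu> (ract x a) else 0)"

definition dright :: "nat \<Rightarrow> ((nat \<Rightarrow> 'k) \<Rightarrow> (nat \<Rightarrow> 'k) \<Rightarrow> (nat \<Rightarrow> 'k))
    \<Rightarrow> ((nat \<Rightarrow> 'k) \<Rightarrow> 'k) \<Rightarrow> (nat \<Rightarrow> 'k::field) \<Rightarrow> ((nat \<Rightarrow> 'k) \<Rightarrow> 'k)" where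
  "dright m lact \<mu> a = (\<lambda>x. if x \<in> kspace m then \<mu> (lact a x) else 0)"

definition triv_mul :: "((nat \<Rightarrow> 'k::field) \<Rightarrow> (nat \<Rightarrow> 'k) \<Rightarrow> (nat \<Rightarrow> 'k))
    \<Rightarrow> nat \<Rightarrow> ((nat \<Rightarrow> 'k) \<Rightarrow> (nat \<Rightarrow> 'k) \<Rightarrow> (nat \<Rightarrow> 'k))
    \<Rightarrow> ((nat \<Rightarrow> 'k) \<Rightarrow> (nat \<Rightarrow> 'k) \<Rightarrow> (nat \<Rightarrow> 'k))
    \<Rightarrow> (nat \<Rightarrow> 'k) \<times> ((nat \<Rightarrow> 'k) \<Rightarrow> 'k) \<Rightarrow> (nat \<Rightarrow> 'k) \<times> ((nat \<Rightarrow> 'k) \<Rightarrow> 'k)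
    \<Rightarrow> (nat \<Rightarrow> 'k) \<times> ((nat \<Rightarrow> 'k) \<Rightarrow> 'k)" where
  "triv_mul mul m lact ract p q =
     (mul (fst p) (fst q), dleft m ract (fst p) (snd q) + dright m lact (snd p) (fst q))"

definition tsc :: "'k::field \<Rightarrow> (nat \<Rightarrow> 'k) \<times> ((nat \<Rightarrow> 'k) \<Rightarrow> 'k)
    \<Rightarrow> (nat \<Rightarrow> 'k) \<times> ((nat \<Rightarrow> 'k) \<Rightarrow> 'k)" where
  "tsc c p = (fsc c (fst p), (\<lambda>x. c * snd p x))"

definition tdim :: "((nat \<Rightarrow> 'k::field) \<times> ((nat \<Rightarrow> 'k) \<Rightarrow> 'k)) set \<Rightarrow> nat" where
  "tdim S = vector_space.dim tsc S"

definition tcorner :: "nat \<Rightarrow> ((nat \<Rightarrow> 'k::field) \<Rightarrow> (nat \<Rightarrow> 'k) \<Rightarrow> (nat \<Rightarrow> 'k))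
    \<Rightarrow> nat \<Rightarrow> ((nat \<Rightarrow> 'k) \<Rightarrow> (nat \<Rightarrow> 'k) \<Rightarrow> (nat \<Rightarrow> 'k))
    \<Rightarrow> ((nat \<Rightarrow> 'k) \<Rightarrow> (nat \<Rightarrow> 'k) \<Rightarrow> (nat \<Rightarrow> 'k))
    \<Rightarrow> (nat \<Rightarrow> nat \<Rightarrow> 'k) \<Rightarrow> nat \<Rightarrow> nat \<Rightarrow> ((nat \<Rightarrow> 'k) \<times> ((nat \<Rightarrow> 'k) \<Rightarrow> 'k)) set" where
  "tcorner d mul m lact ract e i j =
     {triv_mul mul m lact ract (triv_mul mul m lact ract (e i, 0) z) (e j, 0) | z.
        z \<in> kspace d \<times> dualsp m}"

definition cartanL :: "nat \<Rightarrow> ((nat \<Rightarrow> 'k::field) \<Rightarrow> (nat \<Rightarrow> 'k) \<Rightarrow> (nat \<Rightarrow> 'k))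
    \<Rightarrow> nat \<Rightarrow> ((nat \<Rightarrow> 'k) \<Rightarrow> (nat \<Rightarrow> 'k) \<Rightarrow> (nat \<Rightarrow> 'k))
    \<Rightarrow> ((nat \<Rightarrow> 'k) \<Rightarrow> (nat \<Rightarrow> 'k) \<Rightarrow> (nat \<Rightarrow> 'k))
    \<Rightarrow> nat \<Rightarrow> (nat \<Rightarrow> nat \<Rightarrow> 'k) \<Rightarrow> nat \<Rightarrow> nat \<Rightarrow> int" where
  "cartanL d mul m lact ract n e i j =
     int (tdim (tcorner d mul m lact ract e (n + 1 - j) (n + 1 - i)))"

definition Bplus :: "(nat \<Rightarrow> nat \<Rightarrow> int) \<Rightarrow> nat \<Rightarrow> nat \<Rightarrow> int" where
  "Bplus B i j = (if i < j then B i j else if i = j then 1 else 0)"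

definition Bminus :: "(nat \<Rightarrow> nat \<Rightarrow> int) \<Rightarrow> nat \<Rightarrow> nat \<Rightarrow> int" where
  "Bminus B i j = (if i < j then B j i else if i = j then B i i - 1 else 0)"

end

theory Submission
  imports Defs
begin


definition dl :: "nat \<Rightarrow> nat \<Rightarrow> 'k::field" where "dl k = (\<lambda>t. if t = k then 1 else 0)"

definition Amul :: "nat \<Rightarrow> nat \<Rightarrow> (nat\<Rightarrow>nat) \<Rightarrow> (nat\<Rightarrow>nat) \<Rightarrow> (nat\<Rightarrow>'k::field) \<Rightarrow> (nat\<Rightarrow>'k) \<Rightarrow> (nat\<Rightarrow>'k)" where
"Amul n N s r x y = (\<lambda>t. if t < n then x t * y t else if t < n+N then x (s (t-n)) * y t + x t * y (r (t-n)) else 0)"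

definition Aone :: "nat \<Rightarrow> nat \<Rightarrow> 'k::field" where "Aone n = (\<lambda>t. if t<n then 1 else 0)"
definition Lact :: "nat \<Rightarrow> (nat\<Rightarrow>nat) \<Rightarrow> (nat\<Rightarrow>'k::field) \<Rightarrow> (nat\<Rightarrow>'k) \<Rightarrow> (nat\<Rightarrow>'k)" where
 "Lact m \<sigma> a x = (\<lambda>u. if u<m then a (\<sigma> u) * x u else 0)"
definition Ract :: "nat \<Rightarrow> (nat\<Rightarrow>nat) \<Rightarrow> (nat\<Rightarrow>'k::field) \<Rightarrow> (nat\<Rightarrow>'k) \<Rightarrow> (nat\<Rightarrow>'k)" where
 "Ract m \<tau> x a = (\<lambda>u. if u<m then x u * a (\<tau> u) else 0)"

lemma alg:
  assumes "\<forall>t<N. s t < r t \<and> r t < n"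
  shows "fd_algebra (n+N) (Amul n N s r) (Aone n :: nat \<Rightarrow> 'k::field)"
proof -
  have h: "\<And>t. \<not> t < n \<Longrightarrow> t < N + n \<Longrightarrow> s (t-n) < n \<and> r (t-n) < n"
    using assms by (metis add.commute less_diff_conv2 not_less order.strict_trans)
  show ?thesis using h
  unfolding fd_algebra_def kspace_def Amul_def Aone_def fsc_def
  by (auto simp: fun_eq_iff algebra_simps)
qed

lemma bimod:
  assumes "\<forall>u<m. \<sigma> u \<le> \<tau> u \<and> \<tau> u < n"
  shows "fd_bimodule (n+N) (Amul n N s r) (Aone n :: nat \<Rightarrow> 'k::field) m (Lact m \<sigma>) (Ract m \<tau>)"
  using assms
  unfolding fd_bimodule_def kspace_def Amul_def Aone_def fsc_def Lact_def Ract_def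
  by (auto simp: fun_eq_iff algebra_simps)



lemma sum_fun_app: "(\<Sum>a\<in>A. f a) x = (\<Sum>a\<in>A. f a x)"
  by (induction A rule: infinite_finite_induct) auto

lemma vs_fsc: "vector_space (fsc :: 'k::field \<Rightarrow> _)"
  by unfold_locales (auto simp: fsc_def fun_eq_iff algebra_simps)

interpretation fs: vector_space "fsc :: 'k::field \<Rightarrow> (nat \<Rightarrow> 'k) \<Rightarrow> _" by (rule vs_fsc)

lemma inj_dl: "inj (dl :: nat \<Rightarrow> nat \<Rightarrow> 'k::field)"
  by (auto simp: inj_def dl_def fun_eq_iff)

lemma kdim_supp:
  assumes "finite T"
  shows "kdim {v::nat\<Rightarrow>'k::field. \<forall>t. t\<notin>T \<longrightarrow> v t = 0} = card T"
proof -
  let ?B = "(dl :: nat \<Rightarrow> nat \<Rightarrow> 'k) ` T"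
  let ?V = "{v::nat\<Rightarrow>'k::field. \<forall>t. t\<notin>T \<longrightarrow> v t = 0}"
  have "?B \<subseteq> ?V" by (auto simp: dl_def)
  moreover have "?V \<subseteq> fs.span ?B"
  proof
    fix v assume v: "v \<in> ?V"
    have "v = (\<Sum>t\<in>T. fsc (v t) (dl t))"
      using v assms by (auto simp: fun_eq_iff sum_fun_app fsc_def dl_def if_distrib cong: if_cong)
    also have "\<dots> \<in> fs.span ?B"
      by (intro fs.span_sum fs.span_scale fs.span_base) auto
    finally show "v \<in> fs.span ?B" .
  qed
  moreover have "fs.independent ?B"
  proof (rule fs.independent_if_scalars_zero)
    show "finite ?B" using assms by simp
  next
    fix f x assume h: "(\<Sum>x\<in>?B. fsc (f x) x) = 0" and x: "x \<in> ?B"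
    then obtain t0 where t0: "t0 \<in> T" "x = dl t0" by auto
    have "(\<Sum>x\<in>?B. fsc (f x) x) = (\<Sum>t\<in>T. fsc (f (dl t)) (dl t))"
      by (rule sum.reindex_cong[OF inj_on_subset[OF inj_dl]]) auto
    hence "(\<Sum>t\<in>T. fsc (f (dl t)) (dl t)) t0 = 0" using h by simp
    hence "f (dl t0) = 0" using t0 assms
      by (simp add: sum_fun_app fsc_def dl_def if_distrib cong: if_cong)
    thus "f x = 0" using t0 by simp
  qed
  moreover have "card ?B = card T" by (rule card_image[OF inj_on_subset[OF inj_dl]]) auto
  ultimately show ?thesis unfolding kdim_def by (rule fs.dim_unique)
qed



lemma vs_tsc: "vector_space (tsc :: 'k::field \<Rightarrow> _)"
  by unfold_locales (auto simp: tsc_def fsc_def fun_eq_iff algebra_simps)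

interpretation ts: vector_space "tsc :: 'k::field \<Rightarrow> (nat \<Rightarrow> 'k) \<times> ((nat \<Rightarrow> 'k) \<Rightarrow> 'k) \<Rightarrow> _"
  by (rule vs_tsc)

definition phi :: "nat \<Rightarrow> nat \<Rightarrow> (nat \<Rightarrow> 'k::field) \<Rightarrow> 'k" where
  "phi m u = (\<lambda>x. if x \<in> kspace m then x u else 0)"

lemma dl_nz: "dl t \<noteq> (0::nat\<Rightarrow>'k::field)"
proof
  assume "dl t = (0::nat\<Rightarrow>'k::field)"
  hence "dl t t = (0::'k)" by simp
  thus False by (simp add: dl_def)
qed

lemma dl_kspace: "u < m \<Longrightarrow> dl u \<in> kspace m"
  by (auto simp: dl_def kspace_def)

lemma phi_dual: "phi m u \<in> dualsp m"
  by (auto simp: phi_def dualsp_def kspace_def fsc_def)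

lemma sum_kspace: "finite U \<Longrightarrow> U \<subseteq> {..<m} \<Longrightarrow> (\<Sum>u\<in>U. fsc (c u) (dl u)) \<in> kspace m"
  by (auto simp: kspace_def sum_fun_app fsc_def dl_def intro!: sum.neutral)

lemma dual_sum:
  assumes "\<mu> \<in> dualsp m" "finite U" "U \<subseteq> {..<m}"
  shows "\<mu> (\<Sum>u\<in>U. fsc (c u) (dl u)) = (\<Sum>u\<in>U. c u * \<mu> (dl u))"
  using assms(2,3)
proof (induction U rule: finite_induct)
  case empty
  have "(0::nat\<Rightarrow>'a) \<in> kspace m" by (simp add: kspace_def)
  hence "\<mu> (fsc 0 0) = 0 * \<mu> 0" using assms(1) unfolding dualsp_def by blast
  then show ?case by (simp add: fsc_def zero_fun_def)
next
  case (insert x F)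
  have k1: "fsc (c x) (dl x) \<in> kspace m" using insert dl_kspace[of x m]
    by (auto simp: kspace_def fsc_def)
  have k2: "(\<Sum>u\<in>F. fsc (c u) (dl u)) \<in> kspace m" using insert sum_kspace by blast
  have "\<mu> (\<Sum>u\<in>insert x F. fsc (c u) (dl u)) = \<mu> (fsc (c x) (dl x)) + \<mu> (\<Sum>u\<in>F. fsc (c u) (dl u))"
    using insert k1 k2 assms(1) unfolding dualsp_def by simp
  also have "\<mu> (fsc (c x) (dl x)) = c x * \<mu> (dl x)"
    using dl_kspace[of x m] insert assms(1) unfolding dualsp_def by auto
  finally show ?case using insert by simp
qed

lemma tdim_supp:
  assumes T: "finite T" and U: "finite U" "U \<subseteq> {..<m}"
  shows "tdim {(v :: nat \<Rightarrow> 'k::field, \<lambda>x. if x \<in> kspace m then \<mu> (\<lambda>u. if u\<in>U then x u else 0) else 0) | v \<mu>.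
              (\<forall>t. t\<notin>T \<longrightarrow> v t = 0) \<and> \<mu> \<in> dualsp m} = card T + card U"
    (is "tdim ?V = _")
proof -
  let ?B1 = "(\<lambda>t. (dl t :: nat \<Rightarrow> 'k, 0 :: (nat \<Rightarrow> 'k) \<Rightarrow> 'k)) ` T"
  let ?B2 = "(\<lambda>u. (0 :: nat \<Rightarrow> 'k, phi m u :: (nat \<Rightarrow> 'k) \<Rightarrow> 'k)) ` U"
  have proj: "x \<in> kspace m \<Longrightarrow> (\<lambda>u. if u\<in>U then x u else 0) \<in> kspace m" for x :: "nat \<Rightarrow> 'b::zero"
    by (auto simp: kspace_def)
  have "?B1 \<subseteq> ?V"
  proof
    fix p assume "p \<in> ?B1"
    then obtain t where t: "t \<in> T" "p = (dl t, 0)" by auto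
    have "0 \<in> dualsp m" by (auto simp: dualsp_def)
    moreover have "\<forall>t'. t'\<notin>T \<longrightarrow> dl t t' = (0::'k)" using t by (auto simp: dl_def)
    moreover have "p = (dl t, \<lambda>x. if x \<in> kspace m then (0::(nat\<Rightarrow>'k)\<Rightarrow>'k) (\<lambda>u. if u\<in>U then x u else 0) else 0)"
      using t by (auto simp: fun_eq_iff)
    ultimately show "p \<in> ?V" by blast
  qed
  moreover have "?B2 \<subseteq> ?V"
  proof
    fix p assume "p \<in> ?B2"
    then obtain u where u: "u \<in> U" "p = (0, phi m u)" by auto
    have eq: "(\<lambda>x. if x \<in> kspace m then phi m u (\<lambda>u'. if u'\<in>U then x u' else 0) else 0) = phi m u"
      using u proj by (intro ext) (auto simp add: phi_def)
    hence "p = (0, \<lambda>x. if x \<in> kspace m then phi m u (\<lambda>u'. if u'\<in>U then x u' else 0) else 0)"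
      by (subst eq) (rule u(2))
    moreover have "\<forall>t. t\<notin>T \<longrightarrow> (0::nat\<Rightarrow>'k) t = 0" by simp
    ultimately show "p \<in> ?V" using phi_dual[of m u] by blast
  qed
  ultimately have sub: "?B1 \<union> ?B2 \<subseteq> ?V" by blast
  have sp: "?V \<subseteq> ts.span (?B1 \<union> ?B2)"
  proof
    fix p assume "p \<in> ?V"
    then obtain v \<mu> where p: "p = (v, \<lambda>x. if x \<in> kspace m then \<mu> (\<lambda>u. if u\<in>U then x u else 0) else 0)"
      and v: "\<forall>t. t\<notin>T \<longrightarrow> v t = 0" and mu: "\<mu> \<in> dualsp m" by blast
    have e1: "v = (\<Sum>t\<in>T. fsc (v t) (dl t))"
      using v T by (auto simp: fun_eq_iff sum_fun_app fsc_def dl_def if_distrib cong: if_cong)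
    have e2: "(\<lambda>x. if x \<in> kspace m then \<mu> (\<lambda>u. if u\<in>U then x u else 0) else 0)
        = (\<Sum>u\<in>U. (\<lambda>x. \<mu> (dl u) * phi m u x))"
    proof
      fix x :: "nat \<Rightarrow> 'k"
      show "(if x \<in> kspace m then \<mu> (\<lambda>u. if u\<in>U then x u else 0) else 0) = (\<Sum>u\<in>U. (\<lambda>x. \<mu> (dl u) * phi m u x)) x"
      proof (cases "x \<in> kspace m")
        case True
        have "(\<lambda>u. if u\<in>U then x u else 0) = (\<Sum>u\<in>U. fsc (x u) (dl u))"
          using U by (auto simp: fun_eq_iff sum_fun_app fsc_def dl_def if_distrib cong: if_cong)
        hence "\<mu> (\<lambda>u. if u\<in>U then x u else 0) = (\<Sum>u\<in>U. x u * \<mu> (dl u))"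
          using dual_sum[OF mu U] by simp
        then show ?thesis using True by (simp add: sum_fun_app phi_def mult.commute)
      next
        case False
        then show ?thesis by (simp add: sum_fun_app phi_def)
      qed
    qed
    have "p = (\<Sum>t\<in>T. tsc (v t) (dl t, 0)) + (\<Sum>u\<in>U. tsc (\<mu> (dl u)) (0, phi m u))"
    proof -
      have e1': "v i = (\<Sum>t\<in>T. v t * dl t i)" for i
        using fun_cong[OF e1, of i] by (simp add: sum_fun_app fsc_def)
      have e2': "(if x \<in> kspace m then \<mu> (\<lambda>u. if u\<in>U then x u else 0) else 0) = (\<Sum>u\<in>U. \<mu> (dl u) * phi m u x)" for x
        using fun_cong[OF e2, of x] by (simp add: sum_fun_app)
      show ?thesis unfolding p
        by (simp add: prod_eq_iff fun_eq_iff fst_sum snd_sum sum_fun_app tsc_def fsc_def e2' flip: e1')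
    qed
    also have "\<dots> \<in> ts.span (?B1 \<union> ?B2)"
      by (intro ts.span_add ts.span_sum ts.span_scale ts.span_base) auto
    finally show "p \<in> ts.span (?B1 \<union> ?B2)" .
  qed
  have phi_inj: "inj_on (phi m :: nat \<Rightarrow> _ \<Rightarrow> 'k) U"
  proof (rule inj_onI)
    fix a b assume ab: "a \<in> U" "b \<in> U" "phi m a = (phi m b :: _ \<Rightarrow> 'k)"
    hence "phi m a (dl a) = (phi m b (dl a) :: 'k)" by simp
    thus "a = b" using ab U dl_kspace[of a m] by (auto simp: phi_def dl_def split: if_splits)
  qed
  have disj: "?B1 \<inter> ?B2 = {}"
    using dl_nz by auto
  have c1: "card ?B1 = card T"
    by (rule card_image) (auto simp: inj_on_def dl_def fun_eq_iff)
  have c2: "card ?B2 = card U"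
    by (rule card_image) (use phi_inj in \<open>auto simp: inj_on_def\<close>)
  have card: "card (?B1 \<union> ?B2) = card T + card U"
    using card_Un_disjoint[of ?B1 ?B2] disj c1 c2 T U by simp
  have ind: "ts.independent (?B1 \<union> ?B2)"
  proof (rule ts.independent_if_scalars_zero)
    show "finite (?B1 \<union> ?B2)" using T U by simp
  next
    fix f x assume h: "(\<Sum>x\<in>?B1 \<union> ?B2. tsc (f x) x) = 0" and x: "x \<in> ?B1 \<union> ?B2"
    have "(\<Sum>x\<in>?B1 \<union> ?B2. tsc (f x) x) = (\<Sum>x\<in>?B1. tsc (f x) x) + (\<Sum>x\<in>?B2. tsc (f x) x)"
      by (rule sum.union_disjoint) (use T U disj in auto)
    also have "(\<Sum>x\<in>?B1. tsc (f x) x) = (\<Sum>t\<in>T. tsc (f (dl t, 0)) (dl t, 0))"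
      by (rule sum.reindex_cong[where l = "\<lambda>t. (dl t, 0)"]) (auto simp: inj_on_def dl_def fun_eq_iff)
    also have "(\<Sum>x\<in>?B2. tsc (f x) x) = (\<Sum>u\<in>U. tsc (f (0, phi m u)) (0, phi m u))"
      by (rule sum.reindex_cong[where l = "\<lambda>u. (0, phi m u)"]) (use phi_inj in \<open>auto simp: inj_on_def\<close>)
    finally have h2: "(\<Sum>t\<in>T. tsc (f (dl t, 0)) (dl t, 0)) + (\<Sum>u\<in>U. tsc (f (0, phi m u)) (0, phi m u)) = 0"
      using h by (simp add: zero_fun_def)
    from x show "f x = 0"
    proof
      assume "x \<in> ?B1"
      then obtain t0 where t0: "t0 \<in> T" "x = (dl t0, 0)" by auto
      from arg_cong[OF h2, of "\<lambda>p. fst p t0"]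
      have "f (dl t0, 0) = 0" using T t0
        by (simp add: fst_sum sum_fun_app tsc_def fsc_def dl_def if_distrib cong: if_cong)
      thus ?thesis using t0 by simp
    next
      assume "x \<in> ?B2"
      then obtain u0 where u0: "u0 \<in> U" "x = (0, phi m u0)" by auto
      have k: "dl u0 \<in> kspace m" using u0 U dl_kspace by blast
      have "(\<Sum>u\<in>U. f (0, phi m u) * phi m u (dl u0)) = (\<Sum>u\<in>U. if u = u0 then f (0, phi m u) else 0)"
        by (rule sum.cong) (use k in \<open>auto simp: phi_def dl_def\<close>)
      moreover from arg_cong[OF h2, of "\<lambda>p. snd p (dl u0)"]
      have "(\<Sum>u\<in>U. f (0, phi m u) * phi m u (dl u0)) = 0"
        by (simp add: snd_sum sum_fun_app tsc_def)
      ultimately have "f (0, phi m u0) = 0" using U u0 by simp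
      thus ?thesis using u0 by simp
    qed
  qed
  show ?thesis unfolding tdim_def by (rule ts.dim_unique[OF sub sp ind card])
qed



definition TA :: "nat \<Rightarrow> nat \<Rightarrow> (nat\<Rightarrow>nat) \<Rightarrow> (nat\<Rightarrow>nat) \<Rightarrow> nat \<Rightarrow> nat \<Rightarrow> nat set" where
  "TA n N s r i j = {t. t<n \<and> t=i-1 \<and> t=j-1} \<union> {t. n\<le>t \<and> t<n+N \<and> s(t-n)=i-1 \<and> r(t-n)=j-1}"

definition UM :: "nat \<Rightarrow> (nat\<Rightarrow>nat) \<Rightarrow> (nat\<Rightarrow>nat) \<Rightarrow> nat \<Rightarrow> nat \<Rightarrow> nat set" where
  "UM m \<sigma> \<tau> i j = {u. u<m \<and> \<sigma> u = i-1 \<and> \<tau> u = j-1}"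

lemma TA_sub: "TA n N s r i j \<subseteq> {..<n+N}" by (auto simp: TA_def)
lemma TA_fin: "finite (TA n N s r i j)" by (rule finite_subset[OF TA_sub]) auto
lemma UM_sub: "UM m \<sigma> \<tau> i j \<subseteq> {..<m}" by (auto simp: UM_def)
lemma UM_fin: "finite (UM m \<sigma> \<tau> i j)" by (rule finite_subset[OF UM_sub]) auto

lemma corner_formula:
  assumes hs: "\<forall>t<N. s t < r t \<and> r t < n" and i: "1\<le>i" "i\<le>n" and j: "1\<le>j" "j\<le>n"
  shows "Amul n N s r (Amul n N s r (dl (i-1)) a) (dl (j-1)) = (\<lambda>t. if t \<in> TA n N s r i j then a t else (0::'k::field))"
proof -
  have h: "\<And>t. \<not> t < n \<Longrightarrow> t < n + N \<Longrightarrow> s (t-n) < n \<and> r (t-n) < n"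
    using hs by (metis add.commute less_diff_conv2 not_less order.strict_trans)
  show ?thesis using h i j
    by (auto simp: fun_eq_iff Amul_def dl_def TA_def)
qed

lemma mcorner_formula:
  "Lact m \<sigma> (dl (i-1)) (Ract m \<tau> x (dl (j-1))) = (\<lambda>u. if u \<in> UM m \<sigma> \<tau> i j then x u else (0::'k::field))"
  by (auto simp: fun_eq_iff Lact_def Ract_def dl_def UM_def)

lemma supp_set_eq:
  assumes "T \<subseteq> {..<d}"
  shows "{(\<lambda>t. if t \<in> T then a t else (0::'k::zero)) | a. a \<in> kspace d} = {v. \<forall>t. t\<notin>T \<longrightarrow> v t = 0}"
proof (intro equalityI subsetI)
  fix v :: "nat \<Rightarrow> 'k" assume "v \<in> {v. \<forall>t. t\<notin>T \<longrightarrow> v t = 0}"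
  hence v: "\<forall>t. t\<notin>T \<longrightarrow> v t = 0" by simp
  have "v \<in> kspace d" using v assms by (auto simp: kspace_def)
  moreover have "v = (\<lambda>t. if t \<in> T then v t else 0)" using v by auto
  ultimately show "v \<in> {(\<lambda>t. if t \<in> T then a t else (0::'k::zero)) | a. a \<in> kspace d}" by blast
qed auto

lemma corner_eq:
  assumes hs: "\<forall>t<N. s t < r t \<and> r t < n" and i: "1\<le>i" "i\<le>n" and j: "1\<le>j" "j\<le>n"
  shows "corner (n+N) (Amul n N s r) (\<lambda>i. dl (i-1)) i j = {v::nat\<Rightarrow>'k::field. \<forall>t. t\<notin>TA n N s r i j \<longrightarrow> v t = 0}"
  unfolding corner_def corner_formula[OF assms] by (rule supp_set_eq[OF TA_sub])

lemma mcorner_eq: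
  shows "mcorner m (Lact m \<sigma>) (Ract m \<tau>) (\<lambda>i. dl (i-1)) i j = {v::nat\<Rightarrow>'k::field. \<forall>t. t\<notin>UM m \<sigma> \<tau> i j \<longrightarrow> v t = 0}"
  unfolding mcorner_def mcorner_formula by (rule supp_set_eq[OF UM_sub])

lemma tcorner_eq:
  assumes hs: "\<forall>t<N. s t < r t \<and> r t < n" and i: "1\<le>i" "i\<le>n" and j: "1\<le>j" "j\<le>n"
  shows "tcorner (n+N) (Amul n N s r) m (Lact m \<sigma>) (Ract m \<tau>) (\<lambda>i. dl (i-1)) i j =
     {(v :: nat \<Rightarrow> 'k::field, \<lambda>x. if x \<in> kspace m then \<mu> (\<lambda>u. if u\<in>UM m \<sigma> \<tau> j i then x u else 0) else 0) | v \<mu>.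
              (\<forall>t. t\<notin>TA n N s r i j \<longrightarrow> v t = 0) \<and> \<mu> \<in> dualsp m}"
proof -
  have lk: "Lact m \<sigma> a x \<in> kspace m" for a x :: "nat \<Rightarrow> 'k"
    by (auto simp: Lact_def kspace_def)
  have key: "triv_mul (Amul n N s r) m (Lact m \<sigma>) (Ract m \<tau>) (triv_mul (Amul n N s r) m (Lact m \<sigma>) (Ract m \<tau>) (dl (i-1), 0) (a, \<mu>)) (dl (j-1), 0)
     = ((\<lambda>t. if t \<in> TA n N s r i j then a t else 0),
        \<lambda>x. if x \<in> kspace m then \<mu> (\<lambda>u. if u\<in>UM m \<sigma> \<tau> j i then x u else 0) else 0)"
    for a :: "nat \<Rightarrow> 'k" and \<mu>
  proof -
    have eqR: "Ract m \<tau> (Lact m \<sigma> (dl (j-1)) x) (dl (i-1)) = (\<lambda>u. if u\<in>UM m \<sigma> \<tau> j i then x u else 0)" for x :: "nat \<Rightarrow> 'k"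
      by (auto simp: fun_eq_iff Lact_def Ract_def dl_def UM_def)
    show ?thesis
      unfolding triv_mul_def dleft_def dright_def fst_conv snd_conv corner_formula[OF assms] eqR
      by (simp add: lk) (simp add: fun_eq_iff lk eqR[unfolded One_nat_def])
  qed
  have s1: "{(\<lambda>t. if t \<in> TA n N s r i j then a t else 0) | a. a \<in> kspace (n+N)} = {v::nat\<Rightarrow>'k. \<forall>t. t\<notin>TA n N s r i j \<longrightarrow> v t = 0}"
    by (rule supp_set_eq[OF TA_sub])
  show ?thesis
    unfolding tcorner_def
  proof (intro equalityI subsetI)
    fix p :: "(nat \<Rightarrow> 'k) \<times> ((nat \<Rightarrow> 'k) \<Rightarrow> 'k)" assume "p \<in> {triv_mul (Amul n N s r) m (Lact m \<sigma>) (Ract m \<tau>) (triv_mul (Amul n N s r) m (Lact m \<sigma>) (Ract m \<tau>) (dl (i - 1), 0) z) (dl (j - 1), 0) |z. z \<in> kspace (n + N) \<times> dualsp m}"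
    then obtain a :: "nat \<Rightarrow> 'k" and \<mu> where a: "a \<in> kspace (n+N)" "\<mu> \<in> dualsp m" and p: "p = triv_mul (Amul n N s r) m (Lact m \<sigma>) (Ract m \<tau>) (triv_mul (Amul n N s r) m (Lact m \<sigma>) (Ract m \<tau>) (dl (i-1), 0) (a, \<mu>)) (dl (j-1), 0)"
      by auto
    have "(\<lambda>t. if t \<in> TA n N s r i j then a t else 0) \<in> {v::nat\<Rightarrow>'k. \<forall>t. t\<notin>TA n N s r i j \<longrightarrow> v t = 0}"
      by simp
    thus "p \<in> {(v, \<lambda>x. if x \<in> kspace m then \<mu> (\<lambda>u. if u\<in>UM m \<sigma> \<tau> j i then x u else 0) else 0) | v \<mu>.
              (\<forall>t. t\<notin>TA n N s r i j \<longrightarrow> v t = 0) \<and> \<mu> \<in> dualsp m}"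
      unfolding p key using a(2) by blast
  next
    fix p :: "(nat \<Rightarrow> 'k) \<times> ((nat \<Rightarrow> 'k) \<Rightarrow> 'k)" assume "p \<in> {(v :: nat \<Rightarrow> 'k::field, \<lambda>x. if x \<in> kspace m then \<mu> (\<lambda>u. if u\<in>UM m \<sigma> \<tau> j i then x u else 0) else 0) | v \<mu>.
              (\<forall>t. t\<notin>TA n N s r i j \<longrightarrow> v t = 0) \<and> \<mu> \<in> dualsp m}"
    then obtain v \<mu> where p: "p = (v, \<lambda>x. if x \<in> kspace m then \<mu> (\<lambda>u. if u\<in>UM m \<sigma> \<tau> j i then x u else 0) else 0)"
      and v: "\<forall>t. t\<notin>TA n N s r i j \<longrightarrow> v t = 0" and mu: "\<mu> \<in> dualsp m" by blast
    have "v \<in> {(\<lambda>t. if t \<in> TA n N s r i j then a t else 0) | a. a \<in> kspace (n+N)}"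
      unfolding s1 using v by simp
    then obtain a where a: "a \<in> kspace (n+N)" "v = (\<lambda>t. if t \<in> TA n N s r i j then a t else 0)"
      by blast
    have "p = triv_mul (Amul n N s r) m (Lact m \<sigma>) (Ract m \<tau>) (triv_mul (Amul n N s r) m (Lact m \<sigma>) (Ract m \<tau>) (dl (i-1), 0) (a, \<mu>)) (dl (j-1), 0)"
      unfolding key p a(2) ..
    thus "p \<in> {triv_mul (Amul n N s r) m (Lact m \<sigma>) (Ract m \<tau>) (triv_mul (Amul n N s r) m (Lact m \<sigma>) (Ract m \<tau>) (dl (i - 1), 0) z) (dl (j - 1), 0) |z. z \<in> kspace (n + N) \<times> dualsp m}"
      using a(1) mu by blast
  qed
qed



lemma TA_diag: assumes hs: "\<forall>t<N. s t < r t \<and> r t < n" and "1\<le>i" "i\<le>n"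
  shows "TA n N s r i i = {i-1}"
proof (intro equalityI subsetI)
  fix t assume t: "t \<in> TA n N s r i i"
  show "t \<in> {i-1}"
  proof (rule ccontr)
    assume "t \<notin> {i-1}"
    hence "n\<le>t \<and> t<n+N \<and> s(t-n)=i-1 \<and> r(t-n)=i-1" using t unfolding TA_def by auto
    moreover have "t - n < N" using calculation by arith
    ultimately show False using hs by (metis less_irrefl)
  qed
next
  fix t assume "t \<in> {i-1}" thus "t \<in> TA n N s r i i" using assms(2,3) unfolding TA_def by auto
qed

lemma TA_low: assumes hs: "\<forall>t<N. s t < r t \<and> r t < n" and "j < i" "1 \<le> j"
  shows "TA n N s r i j = {}"
proof -
  have ij: "i - 1 > j - 1" using assms(2,3) by arith
  { fix t assume t: "t \<in> TA n N s r i j"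
    have False
    proof (cases "t < n \<and> t=i-1 \<and> t=j-1")
      case True thus False using ij by simp
    next
      case False
      hence "n\<le>t \<and> t<n+N \<and> s(t-n)=i-1 \<and> r(t-n)=j-1" using t unfolding TA_def by auto
      moreover have "t - n < N" using calculation by arith
      ultimately show False using hs ij by (metis less_asym)
    qed }
  thus ?thesis by blast
qed

lemma UM_low: assumes hm: "\<forall>u<m. \<sigma> u \<le> \<tau> u \<and> \<tau> u < n" and "j < i" "1 \<le> j"
  shows "UM m \<sigma> \<tau> i j = {}"
proof -
  have ij: "i - 1 > j - 1" using assms(2,3) by arith
  { fix u assume u: "u \<in> UM m \<sigma> \<tau> i j"
    hence "u < m \<and> \<sigma> u = i-1 \<and> \<tau> u = j-1" unfolding UM_def by auto
    hence False using hm ij by (metis not_le)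
  }
  thus ?thesis by blast
qed

lemma card_TA: assumes hs: "\<forall>t<N. s t < r t \<and> r t < n" and "1\<le>i" "i\<le>n" "1\<le>j" "j\<le>n"
  shows "card (TA n N s r i j) = (if i = j then 1 else 0) + card {k. k<N \<and> s k = i-1 \<and> r k = j-1}"
proof -
  have eq: "TA n N s r i j = {t. t<n \<and> t=i-1 \<and> t=j-1} \<union> (\<lambda>k. k+n) ` {k. k<N \<and> s k = i-1 \<and> r k = j-1}"
  proof (intro equalityI subsetI)
    fix t assume "t \<in> TA n N s r i j"
    then consider "t<n \<and> t=i-1 \<and> t=j-1" | "n\<le>t \<and> t<n+N \<and> s(t-n)=i-1 \<and> r(t-n)=j-1"
      unfolding TA_def by blast
    then show "t \<in> {t. t<n \<and> t=i-1 \<and> t=j-1} \<union> (\<lambda>k. k+n) ` {k. k<N \<and> s k = i-1 \<and> r k = j-1}"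
    proof cases
      case 1 thus ?thesis by blast
    next
      case 2
      hence "t-n \<in> {k. k<N \<and> s k = i-1 \<and> r k = j-1}" by auto
      moreover have "t = (t-n)+n" using 2 by simp
      ultimately show ?thesis by (metis (no_types, lifting) UnI2 rev_image_eqI)
    qed
  next
    fix t assume "t \<in> {t. t<n \<and> t=i-1 \<and> t=j-1} \<union> (\<lambda>k. k+n) ` {k. k<N \<and> s k = i-1 \<and> r k = j-1}"
    thus "t \<in> TA n N s r i j" unfolding TA_def by auto
  qed
  have c1: "card {t. t<n \<and> t=i-1 \<and> t=j-1} = (if i = j then 1 else 0)"
  proof (cases "i = j")
    case True
    hence "{t. t<n \<and> t=i-1 \<and> t=j-1} = {i-1}" using assms by auto
    then show ?thesis using True by simp
  next
    case False
    hence "{t. t<n \<and> t=i-1 \<and> t=j-1} = {}" using assms by auto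
    then show ?thesis using False by simp
  qed
  have c2: "card ((\<lambda>k. k+n) ` {k. k<N \<and> s k = i-1 \<and> r k = j-1}) = card {k. k<N \<and> s k = i-1 \<and> r k = j-1}"
    by (rule card_image) (auto simp: inj_on_def)
  have "card (TA n N s r i j) = card {t. t<n \<and> t=i-1 \<and> t=j-1} + card ((\<lambda>k. k+n) ` {k. k<N \<and> s k = i-1 \<and> r k = j-1})"
    unfolding eq by (rule card_Un_disjoint) auto
  then show ?thesis using c1 c2 by simp
qed

lemma supp_single: "{v::nat\<Rightarrow>'k::field. \<forall>t. t\<notin>{a} \<longrightarrow> v t = 0} = {fsc c (dl a) | c. True}"
proof (intro equalityI subsetI)
  fix v :: "nat \<Rightarrow> 'k" assume "v \<in> {v::nat\<Rightarrow>'k::field. \<forall>t. t\<notin>{a} \<longrightarrow> v t = 0}"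
  hence "v = fsc (v a) (dl a)" by (auto simp: fun_eq_iff fsc_def dl_def)
  thus "v \<in> {fsc c (dl a) | c. True}" by blast
qed (auto simp: fsc_def dl_def)

lemma supp_empty: "{v::nat\<Rightarrow>'k::zero. \<forall>t. t\<notin>{} \<longrightarrow> v t = 0} = {0}"
  by (auto simp: fun_eq_iff)

lemma sum_dl: "(\<Sum>i=1..n. dl (i-1)) = (Aone n :: nat \<Rightarrow> 'k::field)"
proof
  fix t
  have "(\<Sum>i=1..n. dl (i-1) t) = (\<Sum>i\<in>{1..n}. if i = t+1 then (1::'k) else 0)"
    by (rule sum.cong) (auto simp: dl_def)
  also have "\<dots> = (if t < n then 1 else 0)" by (simp add: sum.delta)
  finally show "(\<Sum>i=1..n. dl (i-1)) t = (Aone n :: nat \<Rightarrow> 'k) t"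
    by (simp add: sum_fun_app Aone_def)
qed



lemma prim:
  assumes hs: "\<forall>t<N. s t < r t \<and> r t < n" and i: "1\<le>i" "i\<le>n"
  shows "primitive_idem (n+N) (Amul n N s r) (dl (i-1) :: nat \<Rightarrow> 'k::field)"
proof -
  let ?mul = "Amul n N s r :: (nat \<Rightarrow> 'k) \<Rightarrow> _"
  let ?e = "dl (i-1) :: nat \<Rightarrow> 'k"
  have alg: "fd_algebra (n+N) ?mul (Aone n)" by (rule alg[OF hs])
  have eK: "?e \<in> kspace (n+N)" using i by (auto simp: kspace_def dl_def)
  have ee: "?mul ?e ?e = ?e" using i by (auto simp: Amul_def dl_def fun_eq_iff)
  have idem_e: "idem (n+N) ?mul ?e" using eK ee by (simp add: idem_def)
  have diag: "?mul (?mul ?e a) ?e = (\<lambda>t. if t = i-1 then a t else 0)" for a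
    using corner_formula[OF hs i i, of a] TA_diag[OF hs i] by simp
  have one_val: "\<And>f. idem (n+N) ?mul f \<Longrightarrow> f (i-1) = 0 \<or> f (i-1) = 1"
  proof -
    fix f assume "idem (n+N) ?mul f"
    hence "?mul f f (i-1) = f (i-1)" by (simp add: idem_def)
    moreover have "i - 1 < n" using i by arith
    ultimately have "f (i-1) * f (i-1) = f (i-1)" by (simp add: Amul_def)
    hence "f (i-1) * (f (i-1) - 1) = 0" by (simp add: algebra_simps)
    thus "f (i-1) = 0 \<or> f (i-1) = 1" by simp
  qed
  have nodec: False if f: "idem (n+N) ?mul f" and g: "idem (n+N) ?mul g" and fz: "f \<noteq> 0" and gz: "g \<noteq> 0"
    and fg: "?mul f g = 0" and gf: "?mul g f = 0" and e: "?e = f + g" for f g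
  proof -
    have fK: "f \<in> kspace (n+N)" and gK: "g \<in> kspace (n+N)" using f g by (auto simp: idem_def)
    have ff: "?mul f f = f" and gg: "?mul g g = g" using f g by (auto simp: idem_def)
    have dist: "\<forall>x\<in>kspace (n+N). \<forall>y\<in>kspace (n+N). \<forall>z\<in>kspace (n+N).
        ?mul (x + y) z = ?mul x z + ?mul y z \<and> ?mul x (y + z) = ?mul x y + ?mul x z"
      using alg unfolding fd_algebra_def by blast
    have ef: "?mul ?e f = f" using dist fK gK ff gf e by simp
    have fe: "?mul f ?e = f" using dist fK gK ff fg e by simp
    have eg: "?mul ?e g = g" using dist fK gK gg fg e by simp
    have ge: "?mul g ?e = g" using dist fK gK gg gf e by simp
    have f1: "f = (\<lambda>t. if t = i-1 then f t else 0)" using diag[of f] ef fe by simp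
    have g1: "g = (\<lambda>t. if t = i-1 then g t else 0)" using diag[of g] eg ge by simp
    have "f (i-1) \<noteq> 0"
    proof
      assume z: "f (i-1) = 0"
      have "f t = 0" for t using fun_cong[OF f1, of t] z by (cases "t = i-1") auto
      hence "f = 0" by (simp add: fun_eq_iff)
      thus False using fz by simp
    qed
    hence fv: "f (i-1) = 1" using one_val[OF f] by simp
    have "g (i-1) \<noteq> 0"
    proof
      assume z: "g (i-1) = 0"
      have "g t = 0" for t using fun_cong[OF g1, of t] z by (cases "t = i-1") auto
      hence "g = 0" by (simp add: fun_eq_iff)
      thus False using gz by simp
    qed
    hence gv: "g (i-1) = 1" using one_val[OF g] by simp
    have "?e (i-1) = f (i-1) + g (i-1)" using e by simp
    hence "(1::'k) = 1 + 1" using fv gv by (simp add: dl_def)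
    hence "(1::'k) + 0 = 1 + 1" by (simp only: add_0_right)
    hence "(0::'k) = 1" by (rule add_left_imp_eq)
    thus False by simp
  qed
  show ?thesis unfolding primitive_idem_def using idem_e dl_nz nodec by blast
qed



lemma generic:
  assumes hs: "\<forall>t<N. s t < r t \<and> r t < n" and hm: "\<forall>u<m. \<sigma> u \<le> \<tau> u \<and> \<tau> u < n"
  shows "fd_algebra (n+N) (Amul n N s r) (Aone n :: nat \<Rightarrow> 'k::field) \<and>
     complete_prim_orth (n+N) (Amul n N s r) (Aone n :: nat \<Rightarrow> 'k) n (\<lambda>i. dl (i-1)) \<and>
     triangular_alg (n+N) (Amul n N s r :: (nat \<Rightarrow> 'k) \<Rightarrow> _) n (\<lambda>i. dl (i-1)) \<and>
     fd_bimodule (n+N) (Amul n N s r) (Aone n :: nat \<Rightarrow> 'k) m (Lact m \<sigma>) (Ract m \<tau>) \<and>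
     triangular_bimod m (Lact m \<sigma> :: (nat \<Rightarrow> 'k) \<Rightarrow> _) (Ract m \<tau>) n (\<lambda>i. dl (i-1)) \<and>
     (\<forall>i\<in>{1..n}. \<forall>j\<in>{1..n}. kdim (corner (n+N) (Amul n N s r :: (nat \<Rightarrow> 'k) \<Rightarrow> _) (\<lambda>i. dl (i-1)) i j) = card (TA n N s r i j)) \<and>
     (\<forall>i\<in>{1..n}. \<forall>j\<in>{1..n}. kdim (mcorner m (Lact m \<sigma> :: (nat \<Rightarrow> 'k) \<Rightarrow> _) (Ract m \<tau>) (\<lambda>i. dl (i-1)) i j) = card (UM m \<sigma> \<tau> i j)) \<and>
     (\<forall>i\<in>{1..n}. \<forall>j\<in>{1..n}. tdim (tcorner (n+N) (Amul n N s r :: (nat \<Rightarrow> 'k) \<Rightarrow> _) m (Lact m \<sigma>) (Ract m \<tau>) (\<lambda>i. dl (i-1)) i j)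
         = card (TA n N s r i j) + card (UM m \<sigma> \<tau> j i))"
proof (intro conjI)
  show "fd_algebra (n+N) (Amul n N s r) (Aone n :: nat \<Rightarrow> 'k::field)" by (rule alg[OF hs])
  show "fd_bimodule (n+N) (Amul n N s r) (Aone n :: nat \<Rightarrow> 'k) m (Lact m \<sigma>) (Ract m \<tau>)" by (rule bimod[OF hm])
  show "complete_prim_orth (n+N) (Amul n N s r) (Aone n :: nat \<Rightarrow> 'k) n (\<lambda>i. dl (i-1))"
    unfolding complete_prim_orth_def
  proof (intro conjI ballI impI)
    fix i assume "i \<in> {1..n}"
    thus "primitive_idem (n+N) (Amul n N s r) (dl (i-1) :: nat \<Rightarrow> 'k)" using prim[OF hs] by auto
  next
    fix i j assume "i \<in> {1..n}" "j \<in> {1..n}" "i \<noteq> j"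
    hence "i - 1 \<noteq> j - 1" "i - 1 < n" "j - 1 < n" by auto
    thus "Amul n N s r (dl (i-1)) (dl (j-1)) = (0 :: nat \<Rightarrow> 'k)"
      by (auto simp: Amul_def dl_def fun_eq_iff)
  next
    show "(\<Sum>i=1..n. dl (i-1)) = (Aone n :: nat \<Rightarrow> 'k)" by (rule sum_dl)
  qed
  show "triangular_alg (n+N) (Amul n N s r :: (nat \<Rightarrow> 'k) \<Rightarrow> _) n (\<lambda>i. dl (i-1))"
    unfolding triangular_alg_def
  proof (intro conjI ballI impI)
    fix i j assume i: "i \<in> {1..n}" and j: "j \<in> {1..n}" and ji: "j < i"
    show "corner (n+N) (Amul n N s r :: (nat \<Rightarrow> 'k) \<Rightarrow> _) (\<lambda>i. dl (i-1)) i j = {0}"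
      using corner_eq[OF hs, of i j] TA_low[OF hs ji] i j supp_empty by auto
  next
    fix i assume i: "i \<in> {1..n}"
    show "corner (n+N) (Amul n N s r :: (nat \<Rightarrow> 'k) \<Rightarrow> _) (\<lambda>i. dl (i-1)) i i = {fsc c (dl (i-1)) | c. True}"
    proof -
      have i1: "1 \<le> i" and i2: "i \<le> n" using i by auto
      show ?thesis unfolding corner_eq[OF hs i1 i2 i1 i2] TA_diag[OF hs i1 i2] by (rule supp_single)
    qed
  qed
  show "triangular_bimod m (Lact m \<sigma> :: (nat \<Rightarrow> 'k) \<Rightarrow> _) (Ract m \<tau>) n (\<lambda>i. dl (i-1))"
    unfolding triangular_bimod_def
  proof (intro conjI ballI impI)
    fix i j assume i: "i \<in> {1..n}" and j: "j \<in> {1..n}" and ji: "j < i"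
    show "mcorner m (Lact m \<sigma> :: (nat \<Rightarrow> 'k) \<Rightarrow> _) (Ract m \<tau>) (\<lambda>i. dl (i-1)) i j = {0}"
      using mcorner_eq[of m \<sigma> \<tau> i j] UM_low[OF hm ji] j supp_empty by auto
  qed
  show "\<forall>i\<in>{1..n}. \<forall>j\<in>{1..n}. kdim (corner (n+N) (Amul n N s r :: (nat \<Rightarrow> 'k) \<Rightarrow> _) (\<lambda>i. dl (i-1)) i j) = card (TA n N s r i j)"
  proof (intro ballI)
    fix i j assume i: "i \<in> {1..n}" and j: "j \<in> {1..n}"
    have i1: "1 \<le> i" and i2: "i \<le> n" and j1: "1 \<le> j" and j2: "j \<le> n" using i j by auto
    show "kdim (corner (n+N) (Amul n N s r :: (nat \<Rightarrow> 'k) \<Rightarrow> _) (\<lambda>i. dl (i-1)) i j) = card (TA n N s r i j)"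
      unfolding corner_eq[OF hs i1 i2 j1 j2] by (rule kdim_supp[OF TA_fin])
  qed
  show "\<forall>i\<in>{1..n}. \<forall>j\<in>{1..n}. kdim (mcorner m (Lact m \<sigma> :: (nat \<Rightarrow> 'k) \<Rightarrow> _) (Ract m \<tau>) (\<lambda>i. dl (i-1)) i j) = card (UM m \<sigma> \<tau> i j)"
    unfolding mcorner_eq by (intro ballI kdim_supp[OF UM_fin])
  show "\<forall>i\<in>{1..n}. \<forall>j\<in>{1..n}. tdim (tcorner (n+N) (Amul n N s r :: (nat \<Rightarrow> 'k) \<Rightarrow> _) m (Lact m \<sigma>) (Ract m \<tau>) (\<lambda>i. dl (i-1)) i j)
         = card (TA n N s r i j) + card (UM m \<sigma> \<tau> j i)"
  proof (intro ballI)
    fix i j assume i: "i \<in> {1..n}" and j: "j \<in> {1..n}"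
    have i1: "1 \<le> i" and i2: "i \<le> n" and j1: "1 \<le> j" and j2: "j \<le> n" using i j by auto
    show "tdim (tcorner (n+N) (Amul n N s r :: (nat \<Rightarrow> 'k) \<Rightarrow> _) m (Lact m \<sigma>) (Ract m \<tau>) (\<lambda>i. dl (i-1)) i j)
         = card (TA n N s r i j) + card (UM m \<sigma> \<tau> j i)"
      unfolding tcorner_eq[OF hs i1 i2 j1 j2] by (rule tdim_supp[OF TA_fin UM_fin UM_sub])
  qed
qed



lemma exist_count:
  assumes S: "finite S" and f: "\<forall>x. x \<notin> S \<longrightarrow> f x = 0"
  shows "\<exists>(N::nat) g. (\<forall>t<N. g t \<in> S) \<and> (\<forall>x. card {t. t<N \<and> g t = x} = f x)"
proof -
  define X where "X = Sigma S (\<lambda>x. {..<f x})"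
  have fin: "finite X" unfolding X_def using S by auto
  obtain h where h: "bij_betw h {0..<card X} X" using ex_bij_betw_nat_finite[OF fin] by blast
  have inj: "inj_on h {0..<card X}" using h by (simp add: bij_betw_def)
  have img: "h ` {0..<card X} = X" using h by (simp add: bij_betw_def)
  show ?thesis
  proof (rule exI[of _ "card X"], rule exI[of _ "fst \<circ> h"], intro conjI allI impI)
    fix t assume "t < card X"
    hence "h t \<in> X" using img by auto
    thus "(fst \<circ> h) t \<in> S" unfolding X_def by auto
  next
    fix x
    have "h ` {t. t<card X \<and> (fst \<circ> h) t = x} = {y\<in>X. fst y = x}"
    proof (intro equalityI subsetI)
      fix y assume "y \<in> h ` {t. t<card X \<and> (fst \<circ> h) t = x}"
      thus "y \<in> {y\<in>X. fst y = x}" using img by auto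
    next
      fix y assume y: "y \<in> {y\<in>X. fst y = x}"
      then obtain t where "t \<in> {0..<card X}" "h t = y" using img by (metis (no_types, lifting) imageE mem_Collect_eq)
      thus "y \<in> h ` {t. t<card X \<and> (fst \<circ> h) t = x}" using y by auto
    qed
    moreover have "card (h ` {t. t<card X \<and> (fst \<circ> h) t = x}) = card {t. t<card X \<and> (fst \<circ> h) t = x}"
      by (rule card_image) (rule inj_on_subset[OF inj], auto)
    moreover have "{y\<in>X. fst y = x} = (if x \<in> S then {x} \<times> {..<f x} else {})"
      unfolding X_def by auto
    moreover have "card (if x \<in> S then {x} \<times> {..<f x} else {}) = f x"
      using f by (auto simp: card_cartesian_product)
    ultimately show "card {t. t<card X \<and> (fst \<circ> h) t = x} = f x" by simp
  qed
qed



theorem corollary2p22: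
  fixes B :: "nat \<Rightarrow> nat \<Rightarrow> int" and n :: nat
  assumes "\<forall>i\<in>{1..n}. \<forall>j\<in>{1..n}. B i j \<ge> 0"
    and "\<forall>i\<in>{1..n}. B i i > 0"
  shows "\<exists>(d::nat) (mul :: (nat \<Rightarrow> 'k::field) \<Rightarrow> (nat \<Rightarrow> 'k) \<Rightarrow> (nat \<Rightarrow> 'k)) one e
           (m::nat) lact ract.
     fd_algebra d mul one \<and> complete_prim_orth d mul one n e \<and> triangular_alg d mul n e \<and>
     fd_bimodule d mul one m lact ract \<and> triangular_bimod m lact ract n e \<and>
     (\<forall>i\<in>{1..n}. \<forall>j\<in>{1..n}. cartanA d mul n e i j = Bplus B i j) \<and>
     (\<forall>i\<in>{1..n}. \<forall>j\<in>{1..n}. cartanM m lact ract n e i j = Bminus B i j) \<and>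
     (\<forall>i\<in>{1..n}. \<forall>j\<in>{1..n}. cartanL d mul m lact ract n e i j = B i j)"
proof -
  define fA where "fA = (\<lambda>(p,q). if p<q \<and> q<n then nat (B (n-q) (n-p)) else 0)"
  define fM where "fM = (\<lambda>(p,q). if p\<le>q \<and> q<n then nat (Bminus B (n-q) (n-p)) else 0)"
  have SA: "finite {(p,q). p<q \<and> q<(n::nat)}"
    by (rule finite_subset[of _ "{..<n} \<times> {..<n}"]) auto
  have SM: "finite {(p,q). p\<le>q \<and> q<(n::nat)}"
    by (rule finite_subset[of _ "{..<n} \<times> {..<n}"]) auto
  have "\<exists>(N::nat) g. (\<forall>t<N. g t \<in> {(p,q). p<q \<and> q<n}) \<and> (\<forall>x. card {t. t<N \<and> g t = x} = fA x)"
    by (rule exist_count[OF SA]) (auto simp: fA_def)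
  then obtain NA :: nat and gA where gA1: "\<forall>t<NA. gA t \<in> {(p,q). p<q \<and> q<n}"
    and gA2: "\<forall>x. card {t. t<NA \<and> gA t = x} = fA x"
    by blast
  have "\<exists>(N::nat) g. (\<forall>t<N. g t \<in> {(p,q). p\<le>q \<and> q<n}) \<and> (\<forall>x. card {t. t<N \<and> g t = x} = fM x)"
    by (rule exist_count[OF SM]) (auto simp: fM_def)
  then obtain m :: nat and gM where gM1: "\<forall>t<m. gM t \<in> {(p,q). p\<le>q \<and> q<n}"
    and gM2: "\<forall>x. card {t. t<m \<and> gM t = x} = fM x"
    by blast
  define s where "s = fst \<circ> gA"
  define r where "r = snd \<circ> gA"
  define \<sigma> where "\<sigma> = fst \<circ> gM"
  define \<tau> where "\<tau> = snd \<circ> gM"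
  have hs: "\<forall>t<NA. s t < r t \<and> r t < n" using gA1 by (auto simp: s_def r_def)
  have hm: "\<forall>u<m. \<sigma> u \<le> \<tau> u \<and> \<tau> u < n" using gM1 by (auto simp: \<sigma>_def \<tau>_def)
  have cA: "card {k. k<NA \<and> s k = a \<and> r k = b} = fA (a,b)" for a b
  proof -
    have "{k. k<NA \<and> s k = a \<and> r k = b} = {t. t<NA \<and> gA t = (a,b)}"
      by (auto simp: s_def r_def prod_eq_iff)
    thus ?thesis using gA2 by simp
  qed
  have cM: "card (UM m \<sigma> \<tau> P Q) = fM (P-1,Q-1)" for P Q
  proof -
    have "UM m \<sigma> \<tau> P Q = {t. t<m \<and> gM t = (P-1,Q-1)}"
      by (auto simp: UM_def \<sigma>_def \<tau>_def prod_eq_iff)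
    thus ?thesis using gM2 by simp
  qed
  note G = generic[OF hs hm, where 'k = 'k]
  let ?mul = "Amul n NA s r :: (nat \<Rightarrow> 'k) \<Rightarrow> _"
  let ?e = "(\<lambda>i. dl (i-1)) :: nat \<Rightarrow> nat \<Rightarrow> 'k"
  have arith: "n+1-j \<in> {1..n}" "n+1-j-1 = n-j" "n-(n-j) = j" if "j \<in> {1..n}" for j
    using that by auto
  have TAc: "card (TA n NA s r (n+1-j) (n+1-i)) = (if i = j then 1 else 0) + fA (n-j, n-i)"
    if i: "i \<in> {1..n}" and j: "j \<in> {1..n}" for i j
  proof -
    have "card (TA n NA s r (n+1-j) (n+1-i)) = (if n+1-j = n+1-i then 1 else 0) + fA (n+1-j-1, n+1-i-1)"
      using card_TA[OF hs, of "n+1-j" "n+1-i"] arith[OF i] arith[OF j] cA by auto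
    moreover have "(n+1-j = n+1-i) = (i = j)" using i j by auto
    ultimately show ?thesis using arith[OF i] arith[OF j] by simp
  qed
  show ?thesis
  proof (intro exI conjI)
    show "fd_algebra (n+NA) ?mul (Aone n)" using G by blast
    show "complete_prim_orth (n+NA) ?mul (Aone n) n ?e" using G by blast
    show "triangular_alg (n+NA) ?mul n ?e" using G by blast
    show "fd_bimodule (n+NA) ?mul (Aone n) m (Lact m \<sigma>) (Ract m \<tau>)" using G by blast
    show "triangular_bimod m (Lact m \<sigma>) (Ract m \<tau>) n ?e" using G by blast
    show "\<forall>i\<in>{1..n}. \<forall>j\<in>{1..n}. cartanA (n+NA) ?mul n ?e i j = Bplus B i j"
    proof (intro ballI)
      fix i j assume i: "i \<in> {1..n}" and j: "j \<in> {1..n}"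
      have "cartanA (n+NA) ?mul n ?e i j = int (card (TA n NA s r (n+1-j) (n+1-i)))"
        unfolding cartanA_def using G arith[OF i] arith[OF j] by simp
      also have "\<dots> = int ((if i = j then 1 else 0) + fA (n-j, n-i))" using TAc[OF i j] by simp
      also have "\<dots> = Bplus B i j"
        using i j assms(1) by (auto simp: fA_def Bplus_def)
      finally show "cartanA (n+NA) ?mul n ?e i j = Bplus B i j" .
    qed
    show "\<forall>i\<in>{1..n}. \<forall>j\<in>{1..n}. cartanM m (Lact m \<sigma> :: (nat \<Rightarrow> 'k) \<Rightarrow> _) (Ract m \<tau>) n ?e i j = Bminus B i j"
    proof (intro ballI)
      fix i j assume i: "i \<in> {1..n}" and j: "j \<in> {1..n}"
      have "cartanM m (Lact m \<sigma> :: (nat \<Rightarrow> 'k) \<Rightarrow> _) (Ract m \<tau>) n ?e i j = int (card (UM m \<sigma> \<tau> (n+1-j) (n+1-i)))"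
        unfolding cartanM_def using G arith[OF i] arith[OF j] by simp
      also have "\<dots> = int (fM (n-j, n-i))" using cM arith[OF i] arith[OF j] by simp
      also have "\<dots> = Bminus B i j"
        using i j assms by (auto simp: fM_def Bminus_def)
      finally show "cartanM m (Lact m \<sigma> :: (nat \<Rightarrow> 'k) \<Rightarrow> _) (Ract m \<tau>) n ?e i j = Bminus B i j" .
    qed
    show "\<forall>i\<in>{1..n}. \<forall>j\<in>{1..n}. cartanL (n+NA) ?mul m (Lact m \<sigma>) (Ract m \<tau>) n ?e i j = B i j"
    proof (intro ballI)
      fix i j assume i: "i \<in> {1..n}" and j: "j \<in> {1..n}"
      have "cartanL (n+NA) ?mul m (Lact m \<sigma>) (Ract m \<tau>) n ?e i j
          = int (card (TA n NA s r (n+1-j) (n+1-i)) + card (UM m \<sigma> \<tau> (n+1-i) (n+1-j)))"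
        unfolding cartanL_def using G arith[OF i] arith[OF j] by simp
      also have "\<dots> = int ((if i = j then 1 else 0) + fA (n-j, n-i) + fM (n-i, n-j))"
        using TAc[OF i j] cM arith[OF i] arith[OF j] by simp
      also have "\<dots> = B i j"
        using i j assms by (auto simp: fA_def fM_def Bminus_def)
      finally show "cartanL (n+NA) ?mul m (Lact m \<sigma>) (Ract m \<tau>) n ?e i j = B i j" .
    qed
  qed
qed

end
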